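(* $\mathcal T^+=G\gamma^+$ and $\mathcal T^-=G\gamma^-$, where $\gamma^+=\{(i\sin u,0,\cos u):0<u<\pi\}$ and $\gamma^-=\{(i\sin u,0,\cos u):-\pi<u<0\}$, i.e. $\mathcal T^\pm$ is the union of the orbits under $G$ of the points of $\gamma^\pm$.
   Context: $[z\cdot z']=z_0z'_0-z_1z'_1-z_2z'_2$ on $\mathbb C^3$, $z^2=[z\cdot z]$; $X^{(c)}=\{z\in\mathbb C^3:z^2=-1\}$, $z=x+iy$; $V^+=\{y\in\mathbb R^3:y^2>0,y_0>0\}$, $V^-=-V^+$; $\mathcal T^\pm=\{z=x+iy\in X^{(c)}:y\in V^\pm\}$; $G=SO_0(1,2)$ (connected component of the group of real linear maps preserving $[\cdot]$), acting on $X^{(c)}$ by $gz=gx+igy$. *)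

theory Defs
  imports "HOL-Analysis.Analysis"
begin

text \<open>Coordinates z = (z0,z1,z2) are indexed by the type 3 with z0 = z$1, z1 = z$2, z2 = z$3.\<close>

definition mink :: "'a::comm_ring_1 ^ 3 \<Rightarrow> 'a ^ 3 \<Rightarrow> 'a" where
  "mink z w = z$1 * w$1 - z$2 * w$2 - z$3 * w$3"

definition Xc :: "(complex ^ 3) set" where
  "Xc = {z. mink z z = -1}"

definition re_part :: "complex ^ 3 \<Rightarrow> real ^ 3" where
  "re_part z = (\<chi> i. Re (z$i))"

definition im_part :: "complex ^ 3 \<Rightarrow> real ^ 3" where
  "im_part z = (\<chi> i. Im (z$i))"

definition Vplus :: "(real ^ 3) set" where
  "Vplus = {y. mink y y > 0 \<and> y$1 > 0}"

definition Vminus :: "(real ^ 3) set" where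
  "Vminus = uminus ` Vplus"

definition Tplus :: "(complex ^ 3) set" where
  "Tplus = {z \<in> Xc. im_part z \<in> Vplus}"

definition Tminus :: "(complex ^ 3) set" where
  "Tminus = {z \<in> Xc. im_part z \<in> Vminus}"

definition O12 :: "(real ^ 3 ^ 3) set" where
  "O12 = {g. \<forall>x y. mink (g *v x) (g *v y) = mink x y}"

definition G :: "(real ^ 3 ^ 3) set" where
  "G = connected_component_set O12 (mat 1)"

definition act :: "real ^ 3 ^ 3 \<Rightarrow> complex ^ 3 \<Rightarrow> complex ^ 3" where
  "act g z = (\<chi> i. Complex ((g *v re_part z)$i) ((g *v im_part z)$i))"

definition gamma_pt :: "real \<Rightarrow> complex ^ 3" where
  "gamma_pt u = vector [\<i> * complex_of_real (sin u), 0, complex_of_real (cos u)]"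

definition gamma_plus :: "(complex ^ 3) set" where
  "gamma_plus = gamma_pt ` {0<..<pi}"

definition gamma_minus :: "(complex ^ 3) set" where
  "gamma_minus = gamma_pt ` {-pi<..<0}"

end

theory Submission
  imports Defs
begin

definition M3 :: "real \<Rightarrow> real \<Rightarrow> real \<Rightarrow> real \<Rightarrow> real \<Rightarrow> real \<Rightarrow> real \<Rightarrow> real \<Rightarrow> real \<Rightarrow> real^3^3" where
  "M3 a b c d e f g h k = vector [vector [a,b,c], vector [d,e,f], vector [g,h,k]]"

lemma M3_mv: "M3 a b c d e f g h k *v w = vector [a*w$1+b*w$2+c*w$3, d*w$1+e*w$2+f*w$3, g*w$1+h*w$2+k*w$3]"
  by (simp add: vec_eq_iff forall_3 matrix_vector_mult_def sum_3 M3_def)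

lemma M3_cont:
  assumes "continuous_on S a" "continuous_on S b" "continuous_on S c" "continuous_on S d"
    "continuous_on S e" "continuous_on S f" "continuous_on S g" "continuous_on S h" "continuous_on S k"
  shows "continuous_on S (\<lambda>s. M3 (a s) (b s) (c s) (d s) (e s) (f s) (g s) (h s) (k s))"
proof -
  have eq: "(\<lambda>s. M3 (a s) (b s) (c s) (d s) (e s) (f s) (g s) (h s) (k s)) =
     (\<lambda>s. \<chi> i. \<chi> j. (M3 (a s) (b s) (c s) (d s) (e s) (f s) (g s) (h s) (k s)) $ i $ j)"
    by simp
  show ?thesis unfolding eq
    apply (intro continuous_on_vec_lambda)
    subgoal for i j
      using exhaust_3[of i] exhaust_3[of j] assms by (auto simp: M3_def)
    done
qed

lemma mink3: "mink (x::real^3) y = x$1*y$1 - x$2*y$2 - x$3*y$3"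
  by (simp add: mink_def)

lemma Xc_iff: "z \<in> Xc \<longleftrightarrow> mink (re_part z) (re_part z) - mink (im_part z) (im_part z) = -1
   \<and> mink (re_part z) (im_part z) = 0"
  by (auto simp: Xc_def mink_def re_part_def im_part_def complex_eq_iff algebra_simps power2_eq_square)

lemma re_act: "re_part (act g z) = g *v re_part z"
  by (simp add: act_def re_part_def vec_eq_iff)

lemma im_act: "im_part (act g z) = g *v im_part z"
  by (simp add: act_def im_part_def vec_eq_iff)

lemma cvec_eq: "z = w \<longleftrightarrow> re_part z = re_part w \<and> im_part z = im_part w"
  by (auto simp: re_part_def im_part_def vec_eq_iff complex_eq_iff)

lemma re_gamma: "re_part (gamma_pt u) = vector [0,0,cos u]"
  by (simp add: re_part_def gamma_pt_def vec_eq_iff forall_3)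

lemma im_gamma: "im_part (gamma_pt u) = vector [sin u,0,0]"
  by (simp add: im_part_def gamma_pt_def vec_eq_iff forall_3)

lemma O12_mink: "g \<in> O12 \<Longrightarrow> mink (g *v x) (g *v y) = mink x y"
  by (simp add: O12_def)

lemma O12_mult: "a \<in> O12 \<Longrightarrow> b \<in> O12 \<Longrightarrow> a ** b \<in> O12"
  by (simp add: O12_def matrix_vector_mul_assoc[symmetric])

lemma id_O12: "mat 1 \<in> O12"
  by (simp add: O12_def)

lemma G_sub: "G \<subseteq> O12"
  unfolding G_def by (rule connected_component_subset)

lemma id_G: "mat 1 \<in> G"
  unfolding G_def using id_O12 by simp

lemma G_conn: "connected G"
  unfolding G_def by simp

lemma G_maximal: "T \<subseteq> O12 \<Longrightarrow> connected T \<Longrightarrow> mat 1 \<in> T \<Longrightarrow> T \<subseteq> G"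
  unfolding G_def by (rule connected_component_maximal)

lemma G_mult:
  assumes a: "a \<in> G" and b: "b \<in> G" shows "a ** b \<in> G"
proof -
  have cont: "continuous_on G (\<lambda>b. a ** b)"
    unfolding matrix_matrix_mult_def by (intro continuous_intros)
  let ?T = "(\<lambda>b. a ** b) ` G"
  have c1: "connected ?T" using cont G_conn by (rule connected_continuous_image)
  have aT: "a \<in> ?T" using id_G by (metis image_eqI matrix_mul_rid)
  have TO: "?T \<subseteq> O12" using G_sub a by (auto intro: O12_mult)
  have "?T \<union> G \<subseteq> G"
    apply (rule G_maximal)
    using TO G_sub apply blast
    using c1 G_conn aT a apply (meson connected_Un disjoint_iff)
    using id_G by blast
  then show ?thesis using b by blast
qed

lemma G_range:
  fixes f :: "real \<Rightarrow> real^3^3"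
  assumes "continuous_on UNIV f" "f 0 = mat 1" "\<And>x. f x \<in> O12"
  shows "f x \<in> G"
proof -
  have "range f \<subseteq> G"
    apply (rule G_maximal)
    using assms(3) apply blast
    apply (rule connected_continuous_image[OF assms(1) connected_UNIV])
    using assms(2) by (metis rangeI)
  then show ?thesis by blast
qed

lemma G_Vplus:
  assumes g: "g \<in> G" and y: "y \<in> Vplus" shows "g *v y \<in> Vplus"
proof -
  let ?f = "\<lambda>h::real^3^3. (h *v y) $ 1"
  have cont: "continuous_on G ?f"
    unfolding matrix_vector_mult_def by (intro continuous_intros)
  have conn: "connected (?f ` G)" using cont G_conn by (rule connected_continuous_image)
  have my: "mink y y > 0" "y$1 > 0" using y by (auto simp: Vplus_def)
  have nz: "?f h \<noteq> 0" if "h \<in> G" for h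
  proof
    assume h0: "?f h = 0"
    have "mink (h *v y) (h *v y) = mink y y" using that G_sub O12_mink by blast
    with my h0 show False by (simp add: mink3) (smt (verit) zero_le_square)
  qed
  have "?f g > 0"
  proof (rule ccontr)
    assume "\<not> ?f g > 0"
    then have "?f g \<le> 0" by simp
    moreover have "?f (mat 1) = y$1" by simp
    ultimately have "0 \<in> ?f ` G" using conn g id_G my(2) unfolding connected_iff_interval
      by (metis (no_types, lifting) imageI less_imp_le)
    with nz show False by auto
  qed
  moreover have "mink (g *v y) (g *v y) > 0" using my g G_sub O12_mink by (metis subsetD)
  ultimately show ?thesis by (simp add: Vplus_def)
qed

definition Rot :: "real \<Rightarrow> real^3^3" where
  "Rot a = M3 1 0 0 0 (cos a) (- sin a) 0 (sin a) (cos a)"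

definition Bst :: "real \<Rightarrow> real^3^3" where
  "Bst t = M3 (cosh t) (sinh t) 0 (sinh t) (cosh t) 0 0 0 1"

lemma Rot_O12: "Rot a \<in> O12"
proof -
  have h: "cos a ^ 2 + sin a ^ 2 = 1" by simp
  show ?thesis unfolding O12_def Rot_def
    apply (auto simp: M3_mv mink3)
    using h by algebra
qed

lemma Bst_O12: "Bst t \<in> O12"
proof -
  have h: "cosh t ^ 2 = sinh t ^ 2 + 1" by (rule cosh_square_eq)
  show ?thesis unfolding O12_def Bst_def
    using h by (auto simp: M3_mv mink3) algebra
qed

lemma Rot_G: "Rot a \<in> G"
  apply (rule G_range[of Rot])
  unfolding Rot_def
    apply (intro M3_cont continuous_intros)
  using Rot_O12 by (auto simp: Rot_def M3_def mat_def vec_eq_iff forall_3)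

lemma Bst_G: "Bst a \<in> G"
  apply (rule G_range[of Bst])
  unfolding Bst_def
    apply (intro M3_cont continuous_intros)
  using Bst_O12 by (auto simp: Bst_def M3_def mat_def vec_eq_iff forall_3)

lemma Rot_inv: "Rot a *v (Rot (-a) *v w) = w"
proof -
  have h: "cos a ^ 2 + sin a ^ 2 = 1" by simp
  show ?thesis unfolding Rot_def
    apply (auto simp: M3_mv vec_eq_iff forall_3)
    subgoal using h by algebra
    subgoal using h by algebra
    done
qed

lemma Bst_inv: "Bst a *v (Bst (-a) *v w) = w"
proof -
  have h: "cosh a ^ 2 = sinh a ^ 2 + 1" by (rule cosh_square_eq)
  show ?thesis unfolding Bst_def
    using h by (auto simp: M3_mv vec_eq_iff forall_3) algebra+
qed

lemma orth_space:
  fixes x y :: "real^3"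
  assumes o: "mink x y = 0" and yy: "mink y y > 0"
  shows "mink x x \<le> 0 \<and> (mink x x = 0 \<longrightarrow> x = 0)"
proof -
  define Q where "Q = (x$2)^2 + (x$3)^2"
  have e: "x$1 * y$1 = x$2*y$2 + x$3*y$3" using o by (simp add: mink3)
  have L: "(x$2*y$2 + x$3*y$3)^2 + (x$2*y$3 - x$3*y$2)^2 = Q * ((y$2)^2 + (y$3)^2)"
    unfolding Q_def by algebra
  have y1: "(y$1)^2 > (y$2)^2 + (y$3)^2" using yy by (simp add: mink3 power2_eq_square)
  have y1p: "(y$1)^2 > 0" using y1 by (smt (verit) zero_le_power2)
  have A: "(x$1)^2 * (y$1)^2 \<le> Q * ((y$2)^2 + (y$3)^2)"
    using L e by (smt (verit) power_mult_distrib zero_le_power2)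
  have mm: "mink x x = (x$1)^2 - Q" by (simp add: mink3 Q_def power2_eq_square)
  have Qn: "Q \<ge> 0" unfolding Q_def by simp
  have B: "- mink x x * (y$1)^2 \<ge> Q * mink y y"
  proof -
    have "- mink x x * (y$1)^2 = Q * (y$1)^2 - (x$1)^2 * (y$1)^2" by (simp add: mm algebra_simps)
    also have "\<dots> \<ge> Q * (y$1)^2 - Q * ((y$2)^2 + (y$3)^2)" using A by simp
    also have "Q * (y$1)^2 - Q * ((y$2)^2 + (y$3)^2) = Q * mink y y"
      by (simp add: mink3 power2_eq_square algebra_simps)
    finally show ?thesis .
  qed
  have C: "Q * mink y y \<ge> 0" using Qn yy by simp
  have m1: "mink x x \<le> 0"
  proof (rule ccontr)
    assume "\<not> mink x x \<le> 0"
    then have "- mink x x * (y$1)^2 < 0" using y1p by (simp add: mult_pos_pos)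
    with B C show False by linarith
  qed
  moreover have "mink x x = 0 \<longrightarrow> x = 0"
  proof
    assume m0: "mink x x = 0"
    then have "Q * mink y y \<le> 0" using B by simp
    then have "Q \<le> 0" using yy by (simp add: mult_le_0_iff)
    then have q0: "x$2 = 0" "x$3 = 0" unfolding Q_def by (smt (verit) zero_le_power2 power_eq_0_iff)+
    then have "x$1 = 0" using m0 mm Q_def by simp
    with q0 show "x = 0" by (simp add: vec_eq_iff forall_3)
  qed
  ultimately show ?thesis by blast
qed

lemma boost_to:
  fixes f :: "real^3"
  assumes ff: "mink f f = 1" and f1: "f$1 > 0"
  shows "\<exists>a t. (Rot a ** Bst t) *v vector [1,0,0] = f"
proof -
  define c where "c = f$1"
  have csq: "c^2 - 1 = (f$2)^2 + (f$3)^2" using ff by (simp add: mink3 c_def power2_eq_square)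
  have c1: "c \<ge> 1"
  proof (rule ccontr)
    assume "\<not> c \<ge> 1"
    then have "c * c < 1 * 1" using mult_strict_mono[of c 1 c 1] f1 c_def by simp
    with csq show False by (smt (verit) power2_eq_square zero_le_power2)
  qed
  define t where "t = arcosh c"
  have ct: "cosh t = c" using c1 t_def by simp
  have st: "sinh t = cmod (Complex (f$2) (f$3))"
    using c1 t_def csq by (simp add: sinh_arcosh_real complex_norm)
  define a where "a = Arg (Complex (f$2) (f$3))"
  have rc: "rcis (sinh t) a = Complex (f$2) (f$3)" unfolding st a_def by (rule rcis_cmod_Arg)
  have r2: "sinh t * cos a = f$2" using arg_cong[OF rc, of Re] by simp
  have r3: "sinh t * sin a = f$3" using arg_cong[OF rc, of Im] by simp
  have "(Rot a ** Bst t) *v vector [1,0,0] = f"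
    unfolding matrix_vector_mul_assoc[symmetric] Rot_def Bst_def
    using ct r2 r3 c_def by (simp add: M3_mv vec_eq_iff forall_3 algebra_simps)
  then show ?thesis by blast
qed

lemma rot_to:
  fixes w :: "real^3"
  assumes ww: "mink w w = -1" and w1: "w$1 = 0"
  shows "\<exists>b. Rot b *v vector [0,0,1] = w"
proof -
  have n: "cmod (Complex (w$3) (- (w$2))) = 1"
    using ww w1 by (simp add: mink3 complex_norm power2_eq_square algebra_simps)
  define b where "b = Arg (Complex (w$3) (- (w$2)))"
  have rc: "rcis 1 b = Complex (w$3) (- (w$2))" using rcis_cmod_Arg[of "Complex (w$3) (- (w$2))"]
    unfolding n b_def by simp
  have r2: "cos b = w$3" using arg_cong[OF rc, of Re] by simp
  have r3: "sin b = - w$2" using arg_cong[OF rc, of Im] by simp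
  have "Rot b *v vector [0,0,1] = w"
    unfolding Rot_def using r2 r3 w1 by (simp add: M3_mv vec_eq_iff forall_3)
  then show ?thesis by blast
qed

lemma mink_scale: "mink (a *\<^sub>R (v::real^3)) (b *\<^sub>R w) = a * b * mink v w"
  by (simp add: mink3 algebra_simps)

lemma vec_e0: "vector [a, 0, 0] = a *\<^sub>R (vector [1,0,0] :: real^3)"
  by (simp add: vec_eq_iff forall_3)

lemma vec_e2: "vector [0, 0, a] = a *\<^sub>R (vector [0,0,1] :: real^3)"
  by (simp add: vec_eq_iff forall_3)

lemma exist_plus:
  fixes x y :: "real^3"
  assumes xx: "mink x x - mink y y = -1" and xy: "mink x y = 0" and y: "y \<in> Vplus"
  shows "\<exists>g\<in>G. \<exists>u\<in>{0<..<pi}. g *v vector [0,0,cos u] = x \<and> g *v vector [sin u,0,0] = y"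
proof -
  have yy: "mink y y > 0" "y$1 > 0" using y by (auto simp: Vplus_def)
  have yx: "mink y x = 0" using xy by (simp add: mink3 algebra_simps)
  have mx: "mink x x \<le> 0" and mx0: "mink x x = 0 \<longrightarrow> x = 0" using orth_space[OF xy yy(1)] by auto
  define s where "s = sqrt (mink y y)"
  have s0: "s > 0" using yy s_def by simp
  have s2: "s^2 = mink y y" using yy s_def by simp
  have s1': "s^2 \<le> 1^2" unfolding one_power2 using s2 xx mx by linarith
  have s1: "s \<le> 1" using power2_le_imp_le[OF s1'] by linarith
  define u where "u = arcsin s"
  have su: "sin u = s" using s0 s1 u_def by simp
  have cu: "cos u = sqrt (1 - s^2)" using s0 s1 u_def by (simp add: cos_arcsin)
  have u0: "0 < u" using arcsin_less_mono[of 0 s] s0 s1 u_def by simp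
  have upi: "u < pi" using arcsin_bounded[of s] s0 s1 u_def pi_gt_zero by linarith
  define f where "f = (1/s) *\<^sub>R y"
  have ff: "mink f f = 1" using s2 s0 yy(1) unfolding f_def mink_scale by (simp add: power2_eq_square)
  have f1: "f$1 > 0" using s0 yy unfolding f_def by simp
  obtain a t where hf: "(Rot a ** Bst t) *v vector [1,0,0] = f" using boost_to[OF ff f1] by blast
  define h where "h = Rot a ** Bst t"
  have hG: "h \<in> G" unfolding h_def using Rot_G Bst_G by (rule G_mult)
  have hO: "h \<in> O12" using hG G_sub by blast
  have hy: "h *v vector [sin u,0,0] = y"
    unfolding su vec_e0[of s] matrix_vector_mult_scaleR h_def hf f_def using s0 by simp
  show ?thesis
  proof (cases "s = 1")
    case True
    then have "x = 0" using s2 xx mx0 by simp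
    moreover have "cos u = 0" using True cu by simp
    ultimately have "h *v vector [0,0,cos u] = x"
      by (metis matrix_vector_mult_0_right scaleR_zero_left vec_e2)
    with hy hG u0 upi show ?thesis by (metis greaterThanLessThan_iff)
  next
    case False
    define cc where "cc = sqrt (1 - s^2)"
    have cc0: "cc > 0" using False s1 s0 cc_def
      by (smt (verit) power2_le_imp_le real_sqrt_gt_zero one_power2)
    have cc2: "cc^2 = 1 - s^2" using s1 s0 cc_def by (simp add: power_le_one)
    define f2 where "f2 = (1/cc) *\<^sub>R x"
    have f2f2: "mink f2 f2 = -1" unfolding f2_def mink_scale using cc2 cc0 s2 xx
      by (simp add: field_simps power2_eq_square)
    have f2f: "mink f2 f = 0" unfolding f2_def f_def mink_scale using xy by simp
    define w where "w = (Bst (-t) ** Rot (-a)) *v f2"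
    have hw: "h *v w = f2" unfolding h_def w_def matrix_vector_mul_assoc[symmetric]
      by (simp add: Bst_inv Rot_inv)
    have ww: "mink w w = -1" using O12_mink[OF hO, of w w] hw f2f2 by simp
    have w1: "w$1 = 0"
    proof -
      have "mink w (vector [1,0,0]) = 0"
        using O12_mink[OF hO, of w "vector [1,0,0]"] hw f2f hf h_def by simp
      then show ?thesis by (simp add: mink3)
    qed
    obtain b where rb: "Rot b *v vector [0,0,1] = w" using rot_to[OF ww w1] by blast
    define g where "g = h ** Rot b"
    have gG: "g \<in> G" unfolding g_def using hG Rot_G by (rule G_mult)
    have re0: "Rot b *v vector [1,0,0] = vector [1,0,0]"
      unfolding Rot_def by (simp add: M3_mv vec_eq_iff forall_3)
    have g1: "g *v vector [sin u,0,0] = y"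
      unfolding g_def matrix_vector_mul_assoc[symmetric] using hy
      by (simp add: vec_e0[of "sin u"] matrix_vector_mult_scaleR re0)
    have g2: "g *v vector [0,0,cos u] = x"
      unfolding g_def matrix_vector_mul_assoc[symmetric] vec_e2[of "cos u"] matrix_vector_mult_scaleR
      rb hw f2_def using cc0 cu cc_def by simp
    show ?thesis using gG g1 g2 u0 upi by (metis greaterThanLessThan_iff)
  qed
qed

lemma gamma_Xc: "gamma_pt u \<in> Xc"
  unfolding Xc_iff re_gamma im_gamma by (simp add: mink3 power2_eq_square[symmetric])
    (metis minus_diff_eq minus_add_distrib sin_cos_squared_add diff_conv_add_uminus add.commute)

lemma act_Xc: "g \<in> G \<Longrightarrow> z \<in> Xc \<Longrightarrow> act g z \<in> Xc"
  unfolding Xc_iff re_act im_act using G_sub O12_mink by (metis subsetD)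

lemma neg_e0: "(g::real^3^3) *v vector [-a,0,0] = - (g *v vector [a,0,0])"
  unfolding vec_e0[of "-a"] vec_e0[of a] matrix_vector_mult_scaleR by simp

lemma e0_Vplus: "a > 0 \<Longrightarrow> vector [a,0,0] \<in> Vplus"
  by (simp add: Vplus_def mink3)

lemma Vminus_iff: "y \<in> Vminus \<longleftrightarrow> - y \<in> Vplus"
  unfolding Vminus_def by (metis image_iff minus_minus)

lemma part1: "Tplus = (\<Union>g\<in>G. act g ` gamma_plus)"
proof
  show "Tplus \<subseteq> (\<Union>g\<in>G. act g ` gamma_plus)"
  proof
    fix z assume z: "z \<in> Tplus"
    then have c: "mink (re_part z) (re_part z) - mink (im_part z) (im_part z) = -1"
      "mink (re_part z) (im_part z) = 0" "im_part z \<in> Vplus"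
      by (auto simp: Tplus_def Xc_iff)
    obtain g u where g: "g \<in> G" "u \<in> {0<..<pi}" "g *v vector [0,0,cos u] = re_part z"
      "g *v vector [sin u,0,0] = im_part z" using exist_plus[OF c] by blast
    have "z = act g (gamma_pt u)" unfolding cvec_eq re_act im_act re_gamma im_gamma using g by simp
    then show "z \<in> (\<Union>g\<in>G. act g ` gamma_plus)" using g unfolding gamma_plus_def by blast
  qed
  show "(\<Union>g\<in>G. act g ` gamma_plus) \<subseteq> Tplus"
  proof
    fix z assume "z \<in> (\<Union>g\<in>G. act g ` gamma_plus)"
    then obtain g u where g: "g \<in> G" "u \<in> {0<..<pi}" "z = act g (gamma_pt u)"
      unfolding gamma_plus_def by blast
    have "sin u > 0" using g(2) by (simp add: sin_gt_zero)
    then have "im_part z \<in> Vplus" unfolding g(3) im_act im_gamma using g(1) e0_Vplus G_Vplus by blast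
    moreover have "z \<in> Xc" using g act_Xc gamma_Xc by blast
    ultimately show "z \<in> Tplus" by (simp add: Tplus_def)
  qed
qed

lemma part2: "Tminus = (\<Union>g\<in>G. act g ` gamma_minus)"
proof
  show "Tminus \<subseteq> (\<Union>g\<in>G. act g ` gamma_minus)"
  proof
    fix z assume z: "z \<in> Tminus"
    then have c: "mink (re_part z) (re_part z) - mink (- im_part z) (- im_part z) = -1"
      "mink (re_part z) (- im_part z) = 0" "- im_part z \<in> Vplus"
      by (auto simp: Tminus_def Xc_iff Vminus_iff mink3)
    obtain g u where g: "g \<in> G" "u \<in> {0<..<pi}" "g *v vector [0,0,cos u] = re_part z"
      "g *v vector [sin u,0,0] = - im_part z" using exist_plus[OF c] by blast
    have "z = act g (gamma_pt (-u))" unfolding cvec_eq re_act im_act re_gamma im_gamma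
      using g by (simp add: neg_e0)
    moreover have "-u \<in> {-pi<..<0}" using g(2) by simp
    ultimately show "z \<in> (\<Union>g\<in>G. act g ` gamma_minus)" using g unfolding gamma_minus_def by blast
  qed
  show "(\<Union>g\<in>G. act g ` gamma_minus) \<subseteq> Tminus"
  proof
    fix z assume "z \<in> (\<Union>g\<in>G. act g ` gamma_minus)"
    then obtain g u where g: "g \<in> G" "u \<in> {-pi<..<0}" "z = act g (gamma_pt u)"
      unfolding gamma_minus_def by blast
    have "sin (-u) > 0" using g(2) sin_gt_zero[of "-u"] by simp
    then have "g *v vector [- sin u,0,0] \<in> Vplus" using g(1) e0_Vplus G_Vplus by simp
    then have "im_part z \<in> Vminus" unfolding g(3) im_act im_gamma Vminus_iff neg_e0 .
    moreover have "z \<in> Xc" using g act_Xc gamma_Xc by blast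
    ultimately show "z \<in> Tminus" by (simp add: Tminus_def)
  qed
qed

theorem proposition2:
  shows "Tplus = (\<Union>g\<in>G. act g ` gamma_plus) \<and> Tminus = (\<Union>g\<in>G. act g ` gamma_minus)"
  using part1 part2 by blast

end
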